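(* Let $A,B,C$ be rings (not necessarily with unit) and $f:A\to B$, $g:B\to C$ ring homomorphisms. If $gf$ is a near isomorphism and $f$ is surjective, then both $f$ and $g$ are near isomorphisms.
   Context: A surjective ring morphism $h:X\to Y$ between (not necessarily unital) rings is a near isomorphism if $X\ker(h)=\ker(h)X=0$. *)

theory Defs
  imports Main
begin

text \<open>Rings not necessarily with unit are modelled by the type class ring
(a semiring with additive inverses; no multiplicative unit is required).\<close>

definition ring_hom_nu :: "('a::ring \<Rightarrow> 'b::ring) \<Rightarrow> bool" where
  "ring_hom_nu h \<longleftrightarrow> (\<forall>x y. h (x + y) = h x + h y \<and> h (x * y) = h x * h y)"

definition ker :: "('a::ring \<Rightarrow> 'b::ring) \<Rightarrow> 'a set" where
  "ker h = {x. h x = 0}"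

definition near_iso :: "('a::ring \<Rightarrow> 'b::ring) \<Rightarrow> bool" where
  "near_iso h \<longleftrightarrow> ring_hom_nu h \<and> surj h \<and>
     (\<forall>x. \<forall>k \<in> ker h. x * k = 0 \<and> k * x = 0)"

end

theory Submission
  imports Defs
begin

lemma hom_zero: "ring_hom_nu h \<Longrightarrow> h 0 = 0"
  unfolding ring_hom_nu_def by (metis add_0 add_cancel_right_right)

theorem lemma4p4:
  fixes f :: "'a::ring \<Rightarrow> 'b::ring" and g :: "'b \<Rightarrow> 'c::ring"
  assumes "ring_hom_nu f" and "ring_hom_nu g"
    and "near_iso (g \<circ> f)" and "surj f"
  shows "near_iso f \<and> near_iso g"
proof
  have f0: "f 0 = 0" and g0: "g 0 = 0" using hom_zero assms(1,2) by auto
  have fm: "\<And>x y. f (x * y) = f x * f y" using assms(1) unfolding ring_hom_nu_def by auto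
  have K: "\<And>x k. g (f k) = 0 \<Longrightarrow> x * k = 0 \<and> k * x = 0"
    using assms(3) unfolding near_iso_def ker_def by auto
  show "near_iso f"
  proof -
    have "\<forall>x. \<forall>k \<in> ker f. x * k = 0 \<and> k * x = 0"
    proof (intro allI ballI)
      fix x k assume "k \<in> ker f"
      hence "g (f k) = 0" using g0 unfolding ker_def by simp
      thus "x * k = 0 \<and> k * x = 0" using K by blast
    qed
    thus ?thesis unfolding near_iso_def using assms(1,4) by blast
  qed
  have sg: "surj g" using assms(3) unfolding near_iso_def
  proof -
    have "surj (g \<circ> f)" using assms(3) unfolding near_iso_def by blast
    show ?thesis unfolding surj_def
    proof
      fix z
      obtain a where "z = (g \<circ> f) a" using \<open>surj (g \<circ> f)\<close> by (rule surjE)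
      thus "\<exists>x. z = g x" by auto
    qed
  qed
  have "\<forall>y. \<forall>k \<in> ker g. y * k = 0 \<and> k * y = 0"
  proof (intro allI ballI)
    fix y k assume "k \<in> ker g"
    obtain a where a: "k = f a" using assms(4) by (metis surjD)
    obtain b where b: "y = f b" using assms(4) by (metis surjD)
    have "g (f a) = 0" using \<open>k \<in> ker g\<close> a unfolding ker_def by auto
    hence "b * a = 0 \<and> a * b = 0" using K by auto
    thus "y * k = 0 \<and> k * y = 0" using a b fm f0 by metis
  qed
  thus "near_iso g" unfolding near_iso_def using assms(2) sg by auto
qed

end
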